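(* Let $\left|\psi\right\rangle\in\mathbb{C}^{d_A}\otimes\mathbb{C}^{d_B}$ be a pure bipartite state and let $\rho_A=\mathrm{Tr}_B\left|\psi\right\rangle\left\langle\psi\right|$. Then $$E_{MB}(\left|\psi\right\rangle)=S(\rho_A)=-\mathrm{Tr}(\rho_A\log_2\rho_A),$$ i.e. the entanglement measurement bound of a bipartite pure state equals its entanglement entropy. Moreover, for every orthonormal basis $\{|c^k\rangle\}$ of $\mathbb{C}^{d_A}$, the Alice-outcome distribution $p_k=\langle c^k|\rho_A|c^k\rangle$ satisfies $-\sum_k p_k\log_2 p_k\ge S(\rho_A)$, with equality when $\{|c^k\rangle\}$ is an eigenbasis of $\rho_A$.
   Context: Entanglement measurement bound (EMB). Let $\left|\psi\right\rangle$ be a unit vector in $\mathcal{H}_1\otimes\cdots\otimes\mathcal{H}_N$, $\mathcal{H}_j=\mathbb{C}^{d_j}$. An adaptive local measurement scheme consists of: an ordering $\pi$ of the parties $\{1,\dots,N\}$; an orthonormal basis $\{|\phi^{(1)}_{i_1}\rangle\}_{i_1}$ of $\mathcal{H}_{\pi(1)}$; and, for each $k=2,\dots,N$ and each outcome history $(i_1,\dots,i_{k-1})$, an orthonormal basis $\{|\phi^{(k)}_{i_k|i_1\dots i_{k-1}}\rangle\}_{i_k}$ of $\mathcal{H}_{\pi(k)}$ (which may depend on the history). Its outcome distribution is $p_{i_1\dots i_N}=\big|\big(\langle\phi^{(1)}_{i_1}|\otimes\langle\phi^{(2)}_{i_2|i_1}|\otimes\cdots\otimes\langle\phi^{(N)}_{i_N|i_1\dots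 i_{N-1}}|\big)\left|\psi\right\rangle\big|^2$, where the $k$-th bra acts on the tensor factor of party $\pi(k)$. The EMB is $E_{MB}(\left|\psi\right\rangle)=\min H(\mathbf{p})$, where $H(\mathbf{p})=-\sum p_{i_1\dots i_N}\log_2 p_{i_1\dots i_N}$ is the Shannon entropy and the minimum is over all adaptive local measurement schemes (including all orderings of the parties). *)

theory Defs
  imports Complex_Main
begin

text \<open>A vector of C^d is a function nat => complex, only the
components with index < d are meaningful. A family of vectors indexed by k < d
is a function b :: nat => nat => complex, where b k is the k-th vector and
b k i its i-th component. A bipartite state psi in C^dA (x) C^dB is given by
its coefficient array psi x y (x < dA, y < dB).\<close>

definition onb :: "nat \<Rightarrow> (nat \<Rightarrow> nat \<Rightarrow> complex) \<Rightarrow> bool" where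
  "onb d b \<longleftrightarrow> (\<forall>k<d. \<forall>l<d. (\<Sum>i<d. cnj (b k i) * b l i) = (if k = l then 1 else 0))"

definition eta :: "real \<Rightarrow> real" where
  "eta p = (if p = 0 then 0 else - p * log 2 p)"

text \<open>Outcome probability for measuring party A in basis a (outcome i) and then
party B in basis bs i (outcome j).\<close>
definition probAB :: "nat \<Rightarrow> nat \<Rightarrow> (nat \<Rightarrow> nat \<Rightarrow> complex) \<Rightarrow>
    (nat \<Rightarrow> nat \<Rightarrow> complex) \<Rightarrow> (nat \<Rightarrow> nat \<Rightarrow> nat \<Rightarrow> complex) \<Rightarrow> nat \<Rightarrow> nat \<Rightarrow> real" where
  "probAB dA dB psi a bs i j =
     (cmod (\<Sum>x<dA. \<Sum>y<dB. cnj (a i x) * cnj (bs i j y) * psi x y))\<^sup>2"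

text \<open>Outcome probability for measuring party B first in basis b (outcome i) and then
party A in basis as i (outcome j).\<close>
definition probBA :: "nat \<Rightarrow> nat \<Rightarrow> (nat \<Rightarrow> nat \<Rightarrow> complex) \<Rightarrow>
    (nat \<Rightarrow> nat \<Rightarrow> complex) \<Rightarrow> (nat \<Rightarrow> nat \<Rightarrow> nat \<Rightarrow> complex) \<Rightarrow> nat \<Rightarrow> nat \<Rightarrow> real" where
  "probBA dA dB psi b as i j =
     (cmod (\<Sum>x<dA. \<Sum>y<dB. cnj (as i j x) * cnj (b i y) * psi x y))\<^sup>2"

text \<open>Entropies of all adaptive local measurement schemes (both orderings).\<close>
definition scheme_entropies :: "nat \<Rightarrow> nat \<Rightarrow> (nat \<Rightarrow> nat \<Rightarrow> complex) \<Rightarrow> real set" where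
  "scheme_entropies dA dB psi =
     {h. \<exists>a bs. onb dA a \<and> (\<forall>i<dA. onb dB (bs i)) \<and>
           h = (\<Sum>i<dA. \<Sum>j<dB. eta (probAB dA dB psi a bs i j))}
   \<union> {h. \<exists>b as. onb dB b \<and> (\<forall>i<dB. onb dA (as i)) \<and>
           h = (\<Sum>i<dB. \<Sum>j<dA. eta (probBA dA dB psi b as i j))}"

text \<open>Entanglement measurement bound: the minimum (infimum, attainment stated
separately in the theorem) of the outcome entropy.\<close>
definition E_MB :: "nat \<Rightarrow> nat \<Rightarrow> (nat \<Rightarrow> nat \<Rightarrow> complex) \<Rightarrow> real" where
  "E_MB dA dB psi = Inf (scheme_entropies dA dB psi)"

definition rhoA :: "nat \<Rightarrow> nat \<Rightarrow> (nat \<Rightarrow> nat \<Rightarrow> complex) \<Rightarrow> nat \<Rightarrow> nat \<Rightarrow> complex" where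
  "rhoA dA dB psi x x' = (\<Sum>y<dB. psi x y * cnj (psi x' y))"

definition vn_entropy :: "nat \<Rightarrow> (nat \<Rightarrow> nat \<Rightarrow> complex) \<Rightarrow> real" where
  "vn_entropy d M = (THE s. \<exists>u lam. onb d u \<and>
      (\<forall>x<d. \<forall>x'<d. M x x' = (\<Sum>k<d. complex_of_real (lam k) * u k x * cnj (u k x'))) \<and>
      s = (\<Sum>k<d. eta (lam k)))"

definition alice_prob :: "nat \<Rightarrow> (nat \<Rightarrow> nat \<Rightarrow> complex) \<Rightarrow> (nat \<Rightarrow> nat \<Rightarrow> complex) \<Rightarrow> nat \<Rightarrow> real" where
  "alice_prob d rho c k = Re (\<Sum>x<d. \<Sum>x'<d. cnj (c k x) * rho x x' * c k x')"

definition eigenbasis :: "nat \<Rightarrow> (nat \<Rightarrow> nat \<Rightarrow> complex) \<Rightarrow> (nat \<Rightarrow> nat \<Rightarrow> complex) \<Rightarrow> bool" where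
  "eigenbasis d M c \<longleftrightarrow> onb d c \<and>
     (\<forall>k<d. \<exists>\<mu>. \<forall>x<d. (\<Sum>x'<d. M x x' * c k x') = \<mu> * c k x)"

end

theory Submission
  imports Defs "Jordan_Normal_Form.Spectral_Radius"
begin

definition ip :: "nat \<Rightarrow> (nat \<Rightarrow> complex) \<Rightarrow> (nat \<Rightarrow> complex) \<Rightarrow> complex" where
  "ip d f g = (\<Sum>i<d. cnj (f i) * g i)"
definition app :: "nat \<Rightarrow> (nat \<Rightarrow> nat \<Rightarrow> complex) \<Rightarrow> (nat \<Rightarrow> complex) \<Rightarrow> nat \<Rightarrow> complex" where
  "app d M f x = (\<Sum>x'<d. M x x' * f x')"
definition nrm :: "nat \<Rightarrow> (nat \<Rightarrow> complex) \<Rightarrow> real" where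
  "nrm d f = (\<Sum>i<d. (cmod (f i))\<^sup>2)"

lemma onb_ip: "onb d b \<longleftrightarrow> (\<forall>k<d. \<forall>l<d. ip d (b k) (b l) = (if k = l then 1 else 0))"
  by (simp add: onb_def ip_def)

lemma cnj_mult_self: "cnj z * z = complex_of_real ((cmod z)\<^sup>2)"
  by (metis complex_norm_square mult.commute)
lemma mult_cnj_self: "z * cnj z = complex_of_real ((cmod z)\<^sup>2)"
  by (metis complex_norm_square)

lemma ip_self: "ip d f f = complex_of_real (nrm d f)"
  unfolding ip_def nrm_def by (simp add: cnj_mult_self)

lemma nrm_nonneg: "nrm d f \<ge> 0"
  unfolding nrm_def by (simp add: sum_nonneg)

lemma nrm_zero: "nrm d f = 0 \<Longrightarrow> i < d \<Longrightarrow> f i = 0"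
  unfolding nrm_def by (subst (asm) sum_nonneg_eq_0_iff) auto

lemma ip_cnj: "ip d g f = cnj (ip d f g)"
  unfolding ip_def by (simp add: mult.commute)

lemma ip_sum_right: "ip d f (\<lambda>x. \<Sum>j\<in>J. c j * g j x) = (\<Sum>j\<in>J. c j * ip d f (g j))"
  unfolding ip_def by (simp add: sum_distrib_left sum_distrib_right sum.swap[of _ J] mult_ac)

lemma ip_sum_left: "ip d (\<lambda>x. \<Sum>j\<in>J. c j * g j x) f = (\<Sum>j\<in>J. cnj (c j) * ip d (g j) f)"
  unfolding ip_def by (simp add: sum_distrib_left sum_distrib_right sum.swap[of _ J] mult_ac)

lemma ip_scale_left: "ip d (\<lambda>x. c * g x) f = cnj c * ip d g f"
  unfolding ip_def by (simp add: sum_distrib_left mult_ac)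

lemma ip_scale_right: "ip d f (\<lambda>x. c * g x) = c * ip d f g"
  unfolding ip_def by (simp add: sum_distrib_left mult_ac)

lemma ip_diff_left: "ip d (\<lambda>x. f x - g x) h = ip d f h - ip d g h"
  unfolding ip_def by (simp add: algebra_simps sum_subtractf)

lemma ip_diff_right: "ip d h (\<lambda>x. f x - g x) = ip d h f - ip d h g"
  unfolding ip_def by (simp add: algebra_simps sum_subtractf)

lemma ip_cong: "(\<And>i. i < d \<Longrightarrow> f i = f' i) \<Longrightarrow> (\<And>i. i < d \<Longrightarrow> g i = g' i) \<Longrightarrow> ip d f g = ip d f' g'"
  unfolding ip_def by (rule sum.cong) auto

lemma onb_complete:
  assumes "onb d u" "x < d" "x' < d"
  shows "(\<Sum>k<d. u k x * cnj (u k x')) = (if x = x' then 1 else 0)"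
proof -
  define U where "U = mat d d (\<lambda>(x,k). u k x)"
  define V where "V = mat d d (\<lambda>(k,x). cnj (u k x))"
  have U: "U \<in> carrier_mat d d" and V: "V \<in> carrier_mat d d" unfolding U_def V_def by auto
  have "V * U = 1\<^sub>m d"
  proof (rule eq_matI)
    fix i j assume i: "i < dim_row (1\<^sub>m d)" and j: "j < dim_col (1\<^sub>m d)"
    hence "(V * U) $$ (i,j) = (\<Sum>x<d. cnj (u i x) * u j x)"
      using U V by (simp add: scalar_prod_def U_def V_def lessThan_atLeast0)
    also have "\<dots> = 1\<^sub>m d $$ (i,j)" using assms(1) i j by (simp add: onb_def)
    finally show "(V * U) $$ (i,j) = 1\<^sub>m d $$ (i,j)" .
  qed (auto simp: V_def U_def)
  hence "U * V = 1\<^sub>m d" by (rule mat_mult_left_right_inverse[OF V U])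
  hence "(U * V) $$ (x,x') = 1\<^sub>m d $$ (x,x')" by simp
  thus ?thesis using assms(2,3) U V by (simp add: scalar_prod_def U_def V_def lessThan_atLeast0)
qed

lemma onb_expand:
  assumes "onb d u" "x < d"
  shows "f x = (\<Sum>k<d. ip d (u k) f * u k x)"
proof -
  have "(\<Sum>x'<d. (if x = x' then 1 else 0) * f x') = (\<Sum>x'<d. if x = x' then f x' else 0)"
    by (rule sum.cong) auto
  hence "f x = (\<Sum>x'<d. (if x = x' then 1 else 0) * f x')" using assms(2) by simp
  also have "\<dots> = (\<Sum>x'<d. (\<Sum>k<d. u k x * cnj (u k x')) * f x')"
    by (rule sum.cong) (auto simp: onb_complete[OF assms(1) assms(2)])
  also have "\<dots> = (\<Sum>k<d. ip d (u k) f * u k x)"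
    unfolding ip_def sum_distrib_left sum_distrib_right
    by (rule trans[OF sum.swap]) (simp add: mult_ac)
  finally show ?thesis .
qed

lemma parseval:
  assumes "onb d u"
  shows "(\<Sum>k<d. (cmod (ip d (u k) f))\<^sup>2) = nrm d f"
proof -
  have "complex_of_real (nrm d f) = ip d f f" by (simp add: ip_self)
  also have "\<dots> = ip d f (\<lambda>x. \<Sum>k<d. ip d (u k) f * u k x)"
    by (rule ip_cong) (auto intro: onb_expand[OF assms])
  also have "\<dots> = (\<Sum>k<d. ip d (u k) f * ip d f (u k))" by (rule ip_sum_right)
  also have "\<dots> = (\<Sum>k<d. complex_of_real ((cmod (ip d (u k) f))\<^sup>2))"
    by (rule sum.cong) (auto simp: ip_cnj[of d f] mult_cnj_self simp del: of_real_power)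
  finally show ?thesis by (metis of_real_eq_iff of_real_sum)
qed

definition orthn :: "nat \<Rightarrow> nat \<Rightarrow> (nat \<Rightarrow> nat \<Rightarrow> complex) \<Rightarrow> bool" where
  "orthn d k u \<longleftrightarrow> (\<forall>j<k. \<forall>l<k. ip d (u j) (u l) = (if j = l then 1 else 0))"

lemma onb_orthn: "onb d u \<longleftrightarrow> orthn d d u"
  by (simp add: onb_ip orthn_def)

lemma ext_one:
  assumes k: "k < d" and orth: "orthn d k u"
  shows "\<exists>v. ip d v v = 1 \<and> (\<forall>j<k. ip d (u j) v = 0)"
proof -
  define P where "P i = (\<lambda>x. (if x = i then 1 else 0) - (\<Sum>j<k. cnj (u j i) * u j x))" for i
  have "\<exists>i<d. \<exists>x<d. P i x \<noteq> 0"
  proof (rule ccontr)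
    assume "\<not> ?thesis"
    hence z: "\<And>i. i < d \<Longrightarrow> P i i = 0" by auto
    have "(of_nat d :: complex) = (\<Sum>i<d. (1::complex))" by simp
    also have "\<dots> = (\<Sum>i<d. \<Sum>j<k. cnj (u j i) * u j i)"
    proof (rule sum.cong)
      fix i assume "i \<in> {..<d}"
      thus "1 = (\<Sum>j<k. cnj (u j i) * u j i)" using z[of i] by (simp add: P_def)
    qed simp
    also have "\<dots> = (\<Sum>j<k. ip d (u j) (u j))" unfolding ip_def by (rule sum.swap)
    also have "\<dots> = (\<Sum>j<k. 1)" by (rule sum.cong) (use orth in \<open>auto simp: orthn_def\<close>)
    also have "\<dots> = of_nat k" by simp
    finally show False using k by simp
  qed
  then obtain i x where i: "i < d" and x: "x < d" and nz: "P i x \<noteq> 0" by auto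
  define w where "w = P i"
  have npos: "nrm d w > 0"
  proof -
    have "nrm d w \<noteq> 0" using nrm_zero[of d w x] x nz w_def by auto
    thus ?thesis using nrm_nonneg[of d w] by linarith
  qed
  have ortw: "ip d (u l) w = 0" if l: "l < k" for l
  proof -
    have "ip d (u l) w = ip d (u l) (\<lambda>x. if x = i then 1 else 0) - ip d (u l) (\<lambda>x. \<Sum>j<k. cnj (u j i) * u j x)"
      unfolding w_def P_def by (rule ip_diff_right)
    also have "ip d (u l) (\<lambda>x. if x = i then 1 else 0) = cnj (u l i)"
    proof -
      have "ip d (u l) (\<lambda>x. if x = i then 1 else 0) = (\<Sum>x<d. if x = i then cnj (u l x) else 0)"
        unfolding ip_def by (rule sum.cong) auto
      thus ?thesis using i by simp
    qed
    also have "ip d (u l) (\<lambda>x. \<Sum>j<k. cnj (u j i) * u j x) = (\<Sum>j<k. cnj (u j i) * ip d (u l) (u j))"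
      by (rule ip_sum_right)
    also have "\<dots> = (\<Sum>j<k. if j = l then cnj (u j i) else 0)"
      by (rule sum.cong) (use orth l in \<open>auto simp: orthn_def\<close>)
    also have "\<dots> = cnj (u l i)" using l by simp
    finally show ?thesis by simp
  qed
  define c where "c = complex_of_real (1 / sqrt (nrm d w))"
  define v where "v = (\<lambda>x. c * w x)"
  have "ip d v v = cnj c * (c * ip d w w)" unfolding v_def by (simp add: ip_scale_left ip_scale_right)
  also have "\<dots> = 1" using npos by (simp add: c_def ip_self real_sqrt_mult[symmetric] flip: of_real_mult)
  finally have "ip d v v = 1" .
  moreover have "\<forall>j<k. ip d (u j) v = 0" using ortw by (simp add: v_def ip_scale_right)
  ultimately show ?thesis by blast
qed

lemma ext_all_aux:
  "\<forall>k u. k + m = d \<longrightarrow> orthn d k u \<longrightarrow> (\<exists>u'. onb d u' \<and> (\<forall>j<k. u' j = u j))"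
proof (induction m)
  case 0
  then show ?case by (auto simp: onb_orthn)
next
  case (Suc m)
  show ?case
  proof (intro allI impI)
    fix k u assume km: "k + Suc m = d" and orth: "orthn d k u"
    obtain v where v1: "ip d v v = 1" and vo: "\<forall>j<k. ip d (u j) v = 0"
      using ext_one[of k d u] km orth by auto
    define u1 where "u1 = u(k := v)"
    have "orthn d (Suc k) u1"
      unfolding orthn_def
    proof (intro allI impI)
      fix j l assume j: "j < Suc k" and l: "l < Suc k"
      show "ip d (u1 j) (u1 l) = (if j = l then 1 else 0)"
      proof (cases "j = k")
        case True
        show ?thesis
        proof (cases "l = k")
          case True
          with \<open>j = k\<close> show ?thesis using v1 by (simp add: u1_def)
        next
          case False
          hence "l < k" using l by simp
          hence "ip d (u l) v = 0" using vo by simp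
          hence "ip d v (u l) = 0" by (simp add: ip_cnj[of d v])
          thus ?thesis using True False by (simp add: u1_def)
        qed
      next
        case False
        hence jk: "j < k" using j by simp
        show ?thesis
        proof (cases "l = k")
          case True
          thus ?thesis using vo jk False by (simp add: u1_def)
        next
          case False
          hence "l < k" using l by simp
          thus ?thesis using jk orth \<open>j \<noteq> k\<close> False by (simp add: u1_def orthn_def)
        qed
      qed
    qed
    then obtain u' where "onb d u'" "\<forall>j<Suc k. u' j = u1 j"
      using Suc.IH[rule_format, of "Suc k" u1] km by auto
    thus "\<exists>u'. onb d u' \<and> (\<forall>j<k. u' j = u j)" by (auto simp: u1_def)
  qed
qed

lemma ext_all:
  assumes "k \<le> d" "orthn d k u"
  shows "\<exists>u'. onb d u' \<and> (\<forall>j<k. u' j = u j)"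
  using ext_all_aux[of "d - k" d] assms by auto

lemma sum_split_add: "(\<Sum>c<k+(m::nat). f c) = (\<Sum>c<k. f c) + (\<Sum>a<m. f (k+a))"
  by (induction m) (auto simp: add.assoc)

lemma app_sum: "app d M (\<lambda>x. \<Sum>j\<in>J. c j * g j x) x = (\<Sum>j\<in>J. c j * app d M (g j) x)"
  unfolding app_def by (simp add: sum_distrib_left sum.swap[of _ J] mult_ac)

lemma app_scale: "app d M (\<lambda>x. c * g x) x = c * app d M g x"
  unfolding app_def by (simp add: sum_distrib_left mult_ac)

lemma herm_ip:
  assumes herm: "\<forall>x<d. \<forall>x'<d. M x' x = cnj (M x x')"
  shows "ip d f (app d M g) = ip d (app d M f) g"
proof -
  have "ip d f (app d M g) = (\<Sum>x<d. \<Sum>x'<d. cnj (f x) * M x x' * g x')"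
    unfolding ip_def app_def by (simp add: sum_distrib_left mult_ac)
  also have "\<dots> = (\<Sum>x'<d. \<Sum>x<d. cnj (f x) * M x x' * g x')" by (rule sum.swap)
  also have "\<dots> = ip d (app d M f) g"
    unfolding ip_def app_def sum_distrib_right cnj_sum
  proof (rule sum.cong[OF refl], rule sum.cong[OF refl])
    fix x' x assume "x' \<in> {..<d}" "x \<in> {..<d}"
    hence "cnj (M x' x) = M x x'" using herm by (metis complex_cnj_cnj lessThan_iff)
    thus "cnj (f x) * M x x' * g x' = cnj (M x' x * f x) * g x'" by simp
  qed
  finally show ?thesis .
qed

lemma orthn_extend:
  assumes orth: "orthn d k u" and v1: "ip d v v = 1" and vo: "\<forall>j<k. ip d (u j) v = 0"
  shows "orthn d (Suc k) (u(k := v))"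
  unfolding orthn_def
proof (intro allI impI)
  fix j l assume j: "j < Suc k" and l: "l < Suc k"
  show "ip d ((u(k:=v)) j) ((u(k:=v)) l) = (if j = l then 1 else 0)"
  proof (cases "j = k")
    case True
    show ?thesis
    proof (cases "l = k")
      case True
      with \<open>j = k\<close> show ?thesis using v1 by simp
    next
      case False
      hence "l < k" using l by simp
      hence "ip d (u l) v = 0" using vo by simp
      hence "ip d v (u l) = 0" by (simp add: ip_cnj[of d v])
      thus ?thesis using True False by simp
    qed
  next
    case False
    hence jk: "j < k" using j by simp
    show ?thesis
    proof (cases "l = k")
      case True
      thus ?thesis using vo jk False by simp
    next
      case False
      hence "l < k" using l by simp
      thus ?thesis using jk orth \<open>j \<noteq> k\<close> False by (simp add: orthn_def)
    qed
  qed
qed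

lemma jnf_eigen:
  fixes B :: "nat \<Rightarrow> nat \<Rightarrow> complex"
  assumes m: "m > 0"
  shows "\<exists>z \<nu>. (\<exists>a<m. z a \<noteq> 0) \<and> (\<forall>a<m. (\<Sum>b<m. B a b * z b) = \<nu> * z a)"
proof -
  define A where "A = mat m m (\<lambda>(a,b). B a b)"
  have A: "A \<in> carrier_mat m m" unfolding A_def by simp
  from spectrum_non_empty[OF A m] obtain \<nu> where "eigenvalue A \<nu>" unfolding spectrum_def by auto
  then obtain v where v: "v \<in> carrier_vec m" "v \<noteq> 0\<^sub>v m" "A *\<^sub>v v = \<nu> \<cdot>\<^sub>v v"
    unfolding eigenvalue_def eigenvector_def using A by auto
  define z where "z a = v $ a" for a
  have "\<exists>a<m. z a \<noteq> 0"
  proof (rule ccontr)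
    assume "\<not> ?thesis"
    hence "v = 0\<^sub>v m" using v(1) by (intro eq_vecI) (auto simp: z_def)
    with v(2) show False by simp
  qed
  moreover have "\<forall>a<m. (\<Sum>b<m. B a b * z b) = \<nu> * z a"
  proof (intro allI impI)
    fix a assume a: "a < m"
    have "(A *\<^sub>v v) $ a = (\<nu> \<cdot>\<^sub>v v) $ a" using v(3) by simp
    thus "(\<Sum>b<m. B a b * z b) = \<nu> * z a"
      using a v(1) A by (simp add: A_def scalar_prod_def z_def lessThan_atLeast0)
  qed
  ultimately show ?thesis by blast
qed

lemma spectral:
  assumes herm: "\<forall>x<d. \<forall>x'<d. M x' x = cnj (M x x')"
  shows "\<exists>c. onb d c \<and> (\<forall>k<d. \<exists>\<mu>. \<forall>x<d. app d M (c k) x = \<mu> * c k x)"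
proof -
  have main: "k \<le> d \<longrightarrow> (\<exists>u. orthn d k u \<and> (\<forall>j<k. \<exists>\<mu>. \<forall>x<d. app d M (u j) x = \<mu> * u j x))" for k
  proof (induction k)
    case 0 show ?case by (auto simp: orthn_def)
  next
    case (Suc k)
    show ?case
    proof
      assume kd: "Suc k \<le> d"
      then obtain u where orth: "orthn d k u" and eig: "\<forall>j<k. \<exists>\<mu>. \<forall>x<d. app d M (u j) x = \<mu> * u j x"
        using Suc.IH by auto
      obtain u' where onb': "onb d u'" and agree: "\<forall>j<k. u' j = u j"
        using ext_all[of k d u] kd orth by auto
      define m where "m = d - k"
      have m: "m > 0" and dkm: "d = k + m" using kd by (auto simp: m_def)
      define B where "B a b = ip d (u' (k+a)) (app d M (u' (k+b)))" for a b
      obtain z \<nu> where znz: "\<exists>a<m. z a \<noteq> 0" and zeig: "\<forall>a<m. (\<Sum>b<m. B a b * z b) = \<nu> * z a"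
        using jnf_eigen[OF m, of B] by auto
      define y where "y = (\<lambda>x. \<Sum>b<m. z b * u' (k+b) x)"
      have o': "ip d (u' j) (u' l) = (if j = l then 1 else 0)" if "j < d" "l < d" for j l
        using onb' that by (simp add: onb_ip)
      have ipy: "ip d (u' c) y = (\<Sum>b<m. z b * ip d (u' c) (u' (k+b)))" for c
        unfolding y_def by (rule ip_sum_right)
      have ipy_low: "ip d (u' j) y = 0" if j: "j < k" for j
      proof -
        have "ip d (u' j) y = (\<Sum>b<m. z b * 0)"
          unfolding ipy by (rule sum.cong) (use j kd in \<open>auto simp: o' m_def\<close>)
        thus ?thesis by simp
      qed
      have ipy_hi: "ip d (u' (k+a)) y = z a" if a: "a < m" for a
      proof -
        have "ip d (u' (k+a)) y = (\<Sum>b<m. if b = a then z b else 0)"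
          unfolding ipy by (rule sum.cong) (use a kd in \<open>auto simp: o' m_def\<close>)
        thus ?thesis using a by simp
      qed
      have "ip d y y = (\<Sum>b<m. cnj (z b) * ip d (u' (k+b)) y)"
        by (subst (1) y_def) (rule ip_sum_left)
      also have "\<dots> = (\<Sum>b<m. complex_of_real ((cmod (z b))\<^sup>2))"
        by (rule sum.cong) (auto simp: ipy_hi cnj_mult_self simp del: of_real_power)
      also have "\<dots> = complex_of_real (nrm m z)" by (simp add: nrm_def)
      finally have yy: "ip d y y = complex_of_real (nrm m z)" .
      have npos: "nrm m z > 0"
      proof -
        obtain a where "a < m" "z a \<noteq> 0" using znz by auto
        hence "nrm m z \<noteq> 0" using nrm_zero[of m z a] by auto
        thus ?thesis using nrm_nonneg[of m z] by linarith
      qed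
      have lowB: "ip d (u' c) (app d M (u' (k+b))) = 0" if c: "c < k" and b: "b < m" for c b
      proof -
        obtain \<mu> where mu: "\<forall>x<d. app d M (u c) x = \<mu> * u c x" using eig c by auto
        have "ip d (u' c) (app d M (u' (k+b))) = ip d (app d M (u' c)) (u' (k+b))"
          by (rule herm_ip[OF herm])
        also have "\<dots> = ip d (\<lambda>x. \<mu> * u' c x) (u' (k+b))"
          by (rule ip_cong) (use mu agree c in auto)
        also have "\<dots> = cnj \<mu> * ip d (u' c) (u' (k+b))" by (rule ip_scale_left)
        also have "\<dots> = 0" using c b kd by (simp add: o' m_def)
        finally show ?thesis .
      qed
      have expand: "app d M (u' (k+b)) x = (\<Sum>a<m. B a b * u' (k+a) x)" if b: "b < m" and x: "x < d" for b x
      proof -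
        have "app d M (u' (k+b)) x = (\<Sum>c<d. ip d (u' c) (app d M (u' (k+b))) * u' c x)"
          by (rule onb_expand[OF onb' x])
        also have "\<dots> = (\<Sum>c<k. ip d (u' c) (app d M (u' (k+b))) * u' c x) + (\<Sum>a<m. B a b * u' (k+a) x)"
          unfolding dkm sum_split_add B_def ..
        also have "(\<Sum>c<k. ip d (u' c) (app d M (u' (k+b))) * u' c x) = 0"
          by (rule sum.neutral) (use lowB b in auto)
        finally show ?thesis by simp
      qed
      have yeig: "app d M y x = \<nu> * y x" if x: "x < d" for x
      proof -
        have "app d M y x = (\<Sum>b<m. z b * app d M (u' (k+b)) x)"
          unfolding y_def by (rule app_sum)
        also have "\<dots> = (\<Sum>b<m. z b * (\<Sum>a<m. B a b * u' (k+a) x))"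
          by (rule sum.cong) (use expand x in auto)
        also have "\<dots> = (\<Sum>a<m. (\<Sum>b<m. B a b * z b) * u' (k+a) x)"
          unfolding sum_distrib_left sum_distrib_right
          by (rule trans[OF sum.swap]) (simp add: mult_ac)
        also have "\<dots> = (\<Sum>a<m. \<nu> * z a * u' (k+a) x)"
          by (rule sum.cong) (use zeig in auto)
        also have "\<dots> = \<nu> * y x" unfolding y_def by (simp add: sum_distrib_left mult_ac)
        finally show ?thesis .
      qed
      define cf where "cf = complex_of_real (1 / sqrt (nrm m z))"
      define v where "v = (\<lambda>x. cf * y x)"
      have "ip d v v = cnj cf * (cf * ip d y y)" unfolding v_def by (simp add: ip_scale_left ip_scale_right)
      also have "\<dots> = 1" using npos by (simp add: cf_def yy real_sqrt_mult[symmetric] flip: of_real_mult)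
      finally have v1: "ip d v v = 1" .
      have vo: "\<forall>j<k. ip d (u j) v = 0"
      proof (intro allI impI)
        fix j assume j: "j < k"
        have "ip d (u j) v = cf * ip d (u' j) y" unfolding v_def ip_scale_right using agree j by simp
        thus "ip d (u j) v = 0" using ipy_low j by simp
      qed
      have "orthn d (Suc k) (u(k := v))" by (rule orthn_extend[OF orth v1 vo])
      moreover have "\<forall>j<Suc k. \<exists>\<mu>. \<forall>x<d. app d M ((u(k := v)) j) x = \<mu> * (u(k := v)) j x"
      proof (intro allI impI)
        fix j assume j: "j < Suc k"
        show "\<exists>\<mu>. \<forall>x<d. app d M ((u(k := v)) j) x = \<mu> * (u(k := v)) j x"
        proof (cases "j = k")
          case True
          have "\<forall>x<d. app d M v x = \<nu> * v x"
            unfolding v_def by (simp add: app_scale yeig)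
          thus ?thesis using True by auto
        next
          case False
          thus ?thesis using eig j by simp
        qed
      qed
      ultimately show "\<exists>u. orthn d (Suc k) u \<and> (\<forall>j<Suc k. \<exists>\<mu>. \<forall>x<d. app d M (u j) x = \<mu> * u j x)"
        by blast
    qed
  qed
  from main[of d] show ?thesis by (auto simp: onb_orthn)
qed

definition E :: "real \<Rightarrow> real" where "E p = (if p = 0 then 0 else - p * ln p)"

lemma eta_E: "eta p = E p / ln 2"
  by (simp add: eta_def E_def log_def)

lemma term_ineq:
  fixes B mu q :: real
  assumes B: "B \<ge> 0" and mu: "mu \<ge> 0" and q: "q \<ge> B * mu"
  shows "B * mu * (- ln q) \<ge> B * E mu + B * mu - B * q"
proof (cases "B = 0 \<or> mu = 0")
  case True
  moreover have "B * q \<ge> 0" using B mu q by (metis mult_nonneg_nonneg order_trans zero_le_mult_iff)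
  ultimately show ?thesis by (auto simp: E_def)
next
  case False
  hence Bp: "B > 0" and mp: "mu > 0" using B mu by auto
  hence qp: "q > 0" using q by (metis mult_pos_pos order_less_le_trans)
  have "ln (q / mu) \<le> q / mu - 1" using qp mp by (intro ln_le_minus_one) simp
  hence "ln q - ln mu \<le> q / mu - 1" using qp mp by (simp add: ln_divide_pos)
  hence "mu * (ln q - ln mu) \<le> mu * (q / mu - 1)" using mp by (intro mult_left_mono) auto
  hence "mu * (ln q - ln mu) \<le> q - mu" using mp by (simp add: algebra_simps)
  hence "B * (mu * (ln q - ln mu)) \<le> B * (q - mu)" using Bp by (intro mult_left_mono) auto
  thus ?thesis using mp by (simp add: E_def algebra_simps)
qed

lemma jensen_E:
  fixes B :: "nat \<Rightarrow> nat \<Rightarrow> real" and mu q :: "nat \<Rightarrow> real"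
  assumes fI: "finite I" and fK: "finite K"
    and B: "\<And>i k. i \<in> I \<Longrightarrow> k \<in> K \<Longrightarrow> B i k \<ge> 0"
    and mu: "\<And>k. k \<in> K \<Longrightarrow> mu k \<ge> 0"
    and q: "\<And>i. i \<in> I \<Longrightarrow> q i = (\<Sum>k\<in>K. B i k * mu k)"
    and row: "\<And>i. i \<in> I \<Longrightarrow> (\<Sum>k\<in>K. B i k) \<le> 1"
    and col: "\<And>k. k \<in> K \<Longrightarrow> mu k > 0 \<Longrightarrow> (\<Sum>i\<in>I. B i k) = 1"
  shows "(\<Sum>k\<in>K. E (mu k)) \<le> (\<Sum>i\<in>I. E (q i))"
proof -
  have qnn: "q i \<ge> 0" if "i \<in> I" for i
    using q[OF that] B[OF that] mu by (auto intro: sum_nonneg)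
  have qge: "q i \<ge> B i k * mu k" if i: "i \<in> I" and k: "k \<in> K" for i k
  proof -
    have "B i k * mu k \<le> (\<Sum>k\<in>K. B i k * mu k)"
      by (rule member_le_sum) (use B i mu k fK in auto)
    thus ?thesis using q[OF i] by simp
  qed
  have Eq: "E (q i) = (\<Sum>k\<in>K. B i k * mu k * (- ln (q i)))" if i: "i \<in> I" for i
  proof -
    have "E (q i) = q i * (- ln (q i))" by (simp add: E_def)
    also have "\<dots> = (\<Sum>k\<in>K. B i k * mu k * (- ln (q i)))"
      by (subst (1) q[OF i]) (rule sum_distrib_right)
    finally show ?thesis .
  qed
  have "(\<Sum>i\<in>I. E (q i)) = (\<Sum>i\<in>I. \<Sum>k\<in>K. B i k * mu k * (- ln (q i)))"
    by (rule sum.cong) (auto simp: Eq)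
  also have "\<dots> \<ge> (\<Sum>i\<in>I. \<Sum>k\<in>K. B i k * E (mu k) + B i k * mu k - B i k * q i)"
    by (intro sum_mono term_ineq) (auto simp: B mu qge)
  finally have 1: "(\<Sum>i\<in>I. E (q i)) \<ge> (\<Sum>i\<in>I. \<Sum>k\<in>K. B i k * E (mu k) + B i k * mu k - B i k * q i)" .
  have 2: "(\<Sum>i\<in>I. \<Sum>k\<in>K. B i k * E (mu k) + B i k * mu k - B i k * q i)
      = (\<Sum>k\<in>K. E (mu k) * (\<Sum>i\<in>I. B i k)) + (\<Sum>k\<in>K. mu k * (\<Sum>i\<in>I. B i k))
        - (\<Sum>i\<in>I. q i * (\<Sum>k\<in>K. B i k))"
    by (simp add: sum_subtractf sum.distrib sum_distrib_left sum.swap[of _ I] mult_ac)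
  have colE: "E (mu k) * (\<Sum>i\<in>I. B i k) = E (mu k)" if k: "k \<in> K" for k
    using col[OF k] mu[OF k] by (cases "mu k = 0") (auto simp: E_def)
  have colM: "mu k * (\<Sum>i\<in>I. B i k) = mu k" if k: "k \<in> K" for k
    using col[OF k] mu[OF k] by (cases "mu k = 0") auto
  have rowq: "(\<Sum>i\<in>I. q i * (\<Sum>k\<in>K. B i k)) \<le> (\<Sum>i\<in>I. q i)"
    by (rule sum_mono) (use qnn row in \<open>auto intro: mult_left_le\<close>)
  have sq: "(\<Sum>i\<in>I. q i) = (\<Sum>k\<in>K. mu k * (\<Sum>i\<in>I. B i k))"
    by (simp add: q sum_distrib_left sum.swap[of _ I] mult_ac)
  show ?thesis using 1 2 rowq sq colE colM
    by (simp add: sum.cong[OF refl colE] sum.cong[OF refl colM])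
qed

lemma jensen_eta:
  fixes B :: "nat \<Rightarrow> nat \<Rightarrow> real" and mu q :: "nat \<Rightarrow> real"
  assumes fI: "finite I" and fK: "finite K"
    and B: "\<And>i k. i \<in> I \<Longrightarrow> k \<in> K \<Longrightarrow> B i k \<ge> 0"
    and mu: "\<And>k. k \<in> K \<Longrightarrow> mu k \<ge> 0"
    and q: "\<And>i. i \<in> I \<Longrightarrow> q i = (\<Sum>k\<in>K. B i k * mu k)"
    and row: "\<And>i. i \<in> I \<Longrightarrow> (\<Sum>k\<in>K. B i k) \<le> 1"
    and col: "\<And>k. k \<in> K \<Longrightarrow> mu k > 0 \<Longrightarrow> (\<Sum>i\<in>I. B i k) = 1"
  shows "(\<Sum>k\<in>K. eta (mu k)) \<le> (\<Sum>i\<in>I. eta (q i))"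
proof -
  have "(\<Sum>k\<in>K. E (mu k)) \<le> (\<Sum>i\<in>I. E (q i))" by (rule jensen_E[OF assms])
  hence "(\<Sum>k\<in>K. E (mu k)) / ln 2 \<le> (\<Sum>i\<in>I. E (q i)) / ln 2" by (simp add: divide_right_mono)
  thus ?thesis by (simp add: eta_E sum_divide_distrib)
qed

lemma subadd_eta:
  fixes p :: "nat \<Rightarrow> real"
  assumes fJ: "finite J" and p: "\<And>j. j \<in> J \<Longrightarrow> p j \<ge> 0"
  shows "eta (\<Sum>j\<in>J. p j) \<le> (\<Sum>j\<in>J. eta (p j))"
proof -
  define P where "P = (\<Sum>j\<in>J. p j)"
  have "E P \<le> (\<Sum>j\<in>J. E (p j))"
  proof (cases "P = 0")
    case True
    hence "\<forall>j\<in>J. p j = 0" using p fJ by (simp add: P_def sum_nonneg_eq_0_iff)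
    thus ?thesis using True by (simp add: E_def)
  next
    case False
    have Pp: "P > 0" using False p by (metis P_def order_le_less sum_nonneg)
    have "E P = P * (- ln P)" by (simp add: E_def)
    also have "\<dots> = (\<Sum>j\<in>J. p j * (- ln P))" by (subst (1) P_def) (rule sum_distrib_right)
    also have "\<dots> \<le> (\<Sum>j\<in>J. E (p j))"
    proof (rule sum_mono)
      fix j assume j: "j \<in> J"
      have le: "p j \<le> P" unfolding P_def by (rule member_le_sum) (use p j fJ in auto)
      show "p j * (- ln P) \<le> E (p j)"
      proof (cases "p j = 0")
        case True thus ?thesis by (simp add: E_def)
      next
        case False
        hence "p j > 0" using p[OF j] by simp
        hence "ln (p j) \<le> ln P" using le by simp
        thus ?thesis using \<open>p j > 0\<close> False by (simp add: E_def mult_left_mono)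
      qed
    qed
    finally show ?thesis .
  qed
  hence "E P / ln 2 \<le> (\<Sum>j\<in>J. E (p j)) / ln 2" by (simp add: divide_right_mono)
  thus ?thesis by (simp add: eta_E sum_divide_distrib P_def)
qed

lemma bessel:
  fixes phi :: "nat \<Rightarrow> nat \<Rightarrow> complex" and lam :: "nat \<Rightarrow> real"
  assumes fK: "finite K"
    and orth: "\<And>k l. k \<in> K \<Longrightarrow> l \<in> K \<Longrightarrow> ip d (phi k) (phi l) = (if k = l then complex_of_real (lam k) else 0)"
    and pos: "\<And>k. k \<in> K \<Longrightarrow> lam k > 0"
  shows "(\<Sum>k\<in>K. (cmod (ip d (phi k) f))\<^sup>2 / lam k) \<le> nrm d f"
proof -
  define c where "c k = ip d (phi k) f / complex_of_real (lam k)" for k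
  define S where "S = (\<Sum>k\<in>K. (cmod (ip d (phi k) f))\<^sup>2 / lam k)"
  define g where "g = (\<lambda>x. \<Sum>k\<in>K. c k * phi k x)"
  have ck: "cnj (c k) * ip d (phi k) f = complex_of_real ((cmod (ip d (phi k) f))\<^sup>2 / lam k)" for k
    by (simp add: c_def cnj_mult_self)
  have gf: "ip d g f = complex_of_real S"
    unfolding g_def ip_sum_left S_def by (simp add: ck)
  have pg: "ip d (phi k) g = c k * complex_of_real (lam k)" if k: "k \<in> K" for k
  proof -
    have "ip d (phi k) g = (\<Sum>l\<in>K. c l * ip d (phi k) (phi l))" unfolding g_def by (rule ip_sum_right)
    also have "\<dots> = (\<Sum>l\<in>K. if l = k then c l * complex_of_real (lam k) else 0)"
      by (rule sum.cong) (auto simp: orth k)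
    also have "\<dots> = c k * complex_of_real (lam k)" using k fK by simp
    finally show ?thesis .
  qed
  have gg: "ip d g g = complex_of_real S"
  proof -
    have "ip d g g = (\<Sum>k\<in>K. cnj (c k) * ip d (phi k) g)" by (subst (1) g_def) (rule ip_sum_left)
    also have "\<dots> = (\<Sum>k\<in>K. cnj (c k) * ip d (phi k) f)"
      by (rule sum.cong) (use pos in \<open>auto simp: pg c_def\<close>)
    also have "\<dots> = (\<Sum>k\<in>K. complex_of_real ((cmod (ip d (phi k) f))\<^sup>2 / lam k))"
      by (rule sum.cong) (simp_all only: ck)
    also have "\<dots> = complex_of_real S" unfolding S_def by simp
    finally show ?thesis .
  qed
  have fg: "ip d f g = complex_of_real S" using gf by (simp add: ip_cnj[of d f g])
  have "complex_of_real (nrm d (\<lambda>x. f x - g x)) = ip d (\<lambda>x. f x - g x) (\<lambda>x. f x - g x)"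
    by (simp add: ip_self)
  also have "\<dots> = ip d f f - ip d f g - (ip d g f - ip d g g)"
    by (simp add: ip_diff_left ip_diff_right)
  also have "\<dots> = complex_of_real (nrm d f - S)" unfolding fg gf gg ip_self[of d f] by simp
  finally have "nrm d (\<lambda>x. f x - g x) = nrm d f - S" by (metis of_real_eq_iff)
  thus ?thesis using nrm_nonneg[of d "\<lambda>x. f x - g x"] S_def by simp
qed

definition phiA :: "nat \<Rightarrow> (nat \<Rightarrow> nat \<Rightarrow> complex) \<Rightarrow> (nat \<Rightarrow> complex) \<Rightarrow> nat \<Rightarrow> complex" where
  "phiA dA psi f y = (\<Sum>x<dA. cnj (f x) * psi x y)"

lemma Q1: "ip dA g (app dA (rhoA dA dB psi) f) = ip dB (phiA dA psi f) (phiA dA psi g)"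
proof -
  have "ip dA g (app dA (rhoA dA dB psi) f) =
      (\<Sum>x<dA. \<Sum>x'<dA. \<Sum>y<dB. cnj (g x) * psi x y * cnj (psi x' y) * f x')"
    by (simp add: ip_def app_def rhoA_def sum_distrib_left sum_distrib_right mult_ac)
  also have "\<dots> = (\<Sum>x<dA. \<Sum>y<dB. \<Sum>x'<dA. cnj (g x) * psi x y * cnj (psi x' y) * f x')"
    by (rule sum.cong[OF refl]) (rule sum.swap)
  also have "\<dots> = (\<Sum>y<dB. \<Sum>x<dA. \<Sum>x'<dA. cnj (g x) * psi x y * cnj (psi x' y) * f x')"
    by (rule sum.swap)
  also have "\<dots> = ip dB (phiA dA psi f) (phiA dA psi g)"
    by (simp add: ip_def phiA_def sum_distrib_left sum_distrib_right mult_ac)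
  finally show ?thesis .
qed

lemma Q2: "ip dA f (app dA (rhoA dA dB psi) f) = complex_of_real (nrm dB (phiA dA psi f))"
  by (simp add: Q1 ip_self)

lemma alice_ip: "alice_prob d M c k = Re (ip d (c k) (app d M (c k)))"
  by (simp add: alice_prob_def ip_def app_def sum_distrib_left mult_ac)

lemma alice_nrm: "alice_prob dA (rhoA dA dB psi) c k = nrm dB (phiA dA psi (c k))"
  by (simp add: alice_ip Q2)

definition dec :: "nat \<Rightarrow> (nat \<Rightarrow> nat \<Rightarrow> complex) \<Rightarrow> (nat \<Rightarrow> nat \<Rightarrow> complex) \<Rightarrow> (nat \<Rightarrow> real) \<Rightarrow> bool" where
  "dec d M u lam \<longleftrightarrow> onb d u \<and> (\<forall>x<d. \<forall>x'<d. M x x' = (\<Sum>k<d. complex_of_real (lam k) * u k x * cnj (u k x')))"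

lemma app_dec:
  assumes "dec d M v mu" "x < d"
  shows "app d M f x = (\<Sum>k<d. (complex_of_real (mu k) * ip d (v k) f) * v k x)"
proof -
  have "app d M f x = (\<Sum>x'<d. (\<Sum>k<d. complex_of_real (mu k) * v k x * cnj (v k x')) * f x')"
    unfolding app_def by (rule sum.cong) (use assms in \<open>auto simp: dec_def\<close>)
  also have "\<dots> = (\<Sum>k<d. (complex_of_real (mu k) * ip d (v k) f) * v k x)"
    unfolding ip_def sum_distrib_left sum_distrib_right
    by (rule trans[OF sum.swap]) (simp add: mult_ac)
  finally show ?thesis .
qed

lemma Q3:
  assumes "dec d M v mu"
  shows "ip d g (app d M f) = (\<Sum>k<d. complex_of_real (mu k) * ip d (v k) f * ip d g (v k))"
proof -
  have "ip d g (app d M f) = ip d g (\<lambda>x. \<Sum>k<d. (complex_of_real (mu k) * ip d (v k) f) * v k x)"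
    by (rule ip_cong) (use app_dec[OF assms] in auto)
  also have "\<dots> = (\<Sum>k<d. complex_of_real (mu k) * ip d (v k) f * ip d g (v k))"
    by (rule ip_sum_right)
  finally show ?thesis .
qed

lemma dec_mu:
  assumes "dec d M v mu" "l < d"
  shows "ip d (v l) (app d M (v l)) = complex_of_real (mu l)"
proof -
  have o: "ip d (v j) (v k) = (if j = k then 1 else 0)" if "j < d" "k < d" for j k
    using assms(1) that by (simp add: dec_def onb_ip)
  have "ip d (v l) (app d M (v l)) = (\<Sum>k<d. if k = l then complex_of_real (mu k) else 0)"
    unfolding Q3[OF assms(1)] by (rule sum.cong) (use assms(2) in \<open>auto simp: o\<close>)
  thus ?thesis using assms(2) by simp
qed

lemma dec_mu_nonneg:
  assumes "dec dA (rhoA dA dB psi) v mu" "l < dA"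
  shows "mu l = nrm dB (phiA dA psi (v l))" "mu l \<ge> 0"
proof -
  show "mu l = nrm dB (phiA dA psi (v l))" using dec_mu[OF assms] Q2[of dA "v l" dB psi] by simp
  thus "mu l \<ge> 0" by (simp add: nrm_nonneg)
qed

lemma dec_alice:
  assumes "dec d M v mu"
  shows "alice_prob d M c i = (\<Sum>k<d. mu k * (cmod (ip d (v k) (c i)))\<^sup>2)"
proof -
  have "ip d (c i) (app d M (c i)) = (\<Sum>k<d. complex_of_real (mu k * (cmod (ip d (v k) (c i)))\<^sup>2))"
    unfolding Q3[OF assms]
    by (rule sum.cong) (auto simp: ip_cnj[of d "c i"] mult_cnj_self simp del: of_real_power)
  thus ?thesis unfolding alice_ip by (metis Re_complex_of_real of_real_sum)
qed

lemma onb_nrm: "onb d c \<Longrightarrow> i < d \<Longrightarrow> nrm d (c i) = 1"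
  using ip_self[of d "c i"] by (simp add: onb_ip)

lemma lower_bound:
  assumes dv: "dec dA (rhoA dA dB psi) v mu" and c: "onb dA c"
  shows "(\<Sum>k<dA. eta (mu k)) \<le> (\<Sum>i<dA. eta (alice_prob dA (rhoA dA dB psi) c i))"
proof (rule jensen_eta[where B = "\<lambda>i k. (cmod (ip dA (v k) (c i)))\<^sup>2"])
  have v: "onb dA v" using dv by (simp add: dec_def)
  show "\<And>k. k \<in> {..<dA} \<Longrightarrow> 0 \<le> mu k" using dec_mu_nonneg(2)[OF dv] by auto
  show "\<And>i. i \<in> {..<dA} \<Longrightarrow> alice_prob dA (rhoA dA dB psi) c i = (\<Sum>k<dA. (cmod (ip dA (v k) (c i)))\<^sup>2 * mu k)"
    using dec_alice[OF dv] by (simp add: mult.commute)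
  show "\<And>i. i \<in> {..<dA} \<Longrightarrow> (\<Sum>k<dA. (cmod (ip dA (v k) (c i)))\<^sup>2) \<le> 1"
    using parseval[OF v] onb_nrm[OF c] by simp
  show "\<And>k. k \<in> {..<dA} \<Longrightarrow> 0 < mu k \<Longrightarrow> (\<Sum>i<dA. (cmod (ip dA (v k) (c i)))\<^sup>2) = 1"
  proof -
    fix k assume k: "k \<in> {..<dA}"
    have "(\<Sum>i<dA. (cmod (ip dA (v k) (c i)))\<^sup>2) = (\<Sum>i<dA. (cmod (ip dA (c i) (v k)))\<^sup>2)"
      by (simp add: ip_cnj[of dA "v k"])
    also have "\<dots> = 1" using parseval[OF c] onb_nrm[OF v] k by simp
    finally show "(\<Sum>i<dA. (cmod (ip dA (v k) (c i)))\<^sup>2) = 1" .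
  qed
qed auto

lemma herm_rho: "\<forall>x<dA. \<forall>x'<dA. rhoA dA dB psi x' x = cnj (rhoA dA dB psi x x')"
  by (simp add: rhoA_def mult.commute)

lemma eig_real:
  assumes c: "onb dA c" and k: "k < dA" and ev: "\<forall>x<dA. app dA (rhoA dA dB psi) (c k) x = \<nu> * c k x"
  shows "\<forall>x<dA. app dA (rhoA dA dB psi) (c k) x = complex_of_real (alice_prob dA (rhoA dA dB psi) c k) * c k x"
proof -
  have "ip dA (c k) (app dA (rhoA dA dB psi) (c k)) = ip dA (c k) (\<lambda>x. \<nu> * c k x)"
    by (rule ip_cong) (use ev in auto)
  also have "\<dots> = \<nu>" using c k by (simp add: ip_scale_right onb_ip)
  finally have "\<nu> = complex_of_real (nrm dB (phiA dA psi (c k)))" by (simp add: Q2)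
  thus ?thesis using ev by (simp add: alice_nrm)
qed

lemma eig_dec:
  assumes c: "onb dA c" and ev: "\<forall>k<dA. \<exists>\<nu>. \<forall>x<dA. app dA (rhoA dA dB psi) (c k) x = \<nu> * c k x"
  shows "dec dA (rhoA dA dB psi) c (\<lambda>k. alice_prob dA (rhoA dA dB psi) c k)"
  unfolding dec_def
proof (intro conjI c allI impI)
  let ?r = "rhoA dA dB psi"
  have ev': "app dA ?r (c k) x = complex_of_real (alice_prob dA ?r c k) * c k x" if "k < dA" "x < dA" for k x
    using ev eig_real[OF c] that by blast
  fix x x' assume x: "x < dA" and x': "x' < dA"
  have "?r x x' = (\<Sum>x''<dA. ?r x x'' * (if x'' = x' then 1 else 0))"
    using x' by (simp add: if_distrib cong: if_cong)
  also have "\<dots> = (\<Sum>x''<dA. ?r x x'' * (\<Sum>k<dA. c k x'' * cnj (c k x')))"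
    by (rule sum.cong) (auto simp: onb_complete[OF c _ x'])
  also have "\<dots> = (\<Sum>k<dA. app dA ?r (c k) x * cnj (c k x'))"
    unfolding app_def sum_distrib_left sum_distrib_right
    by (rule trans[OF sum.swap]) (simp add: mult_ac)
  also have "\<dots> = (\<Sum>k<dA. complex_of_real (alice_prob dA ?r c k) * c k x * cnj (c k x'))"
    by (rule sum.cong) (auto simp: ev' x)
  finally show "?r x x' = (\<Sum>k<dA. complex_of_real (alice_prob dA ?r c k) * c k x * cnj (c k x'))" .
qed

lemma vn_eq:
  assumes dv: "dec dA (rhoA dA dB psi) v mu"
  shows "vn_entropy dA (rhoA dA dB psi) = (\<Sum>k<dA. eta (mu k))"
  unfolding vn_entropy_def
proof (rule the_equality)
  show "\<exists>u lam. onb dA u \<and> (\<forall>x<dA. \<forall>x'<dA. rhoA dA dB psi x x' = (\<Sum>k<dA. complex_of_real (lam k) * u k x * cnj (u k x'))) \<and>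
      (\<Sum>k<dA. eta (mu k)) = (\<Sum>k<dA. eta (lam k))"
    using dv unfolding dec_def by blast
next
  fix s assume "\<exists>u lam. onb dA u \<and> (\<forall>x<dA. \<forall>x'<dA. rhoA dA dB psi x x' = (\<Sum>k<dA. complex_of_real (lam k) * u k x * cnj (u k x'))) \<and>
      s = (\<Sum>k<dA. eta (lam k))"
  then obtain u lam where du: "dec dA (rhoA dA dB psi) u lam" and s: "s = (\<Sum>k<dA. eta (lam k))"
    unfolding dec_def by blast
  have al: "alice_prob dA (rhoA dA dB psi) w i = m i" if "dec dA (rhoA dA dB psi) w m" "i < dA" for w m i
    using dec_mu[OF that] by (simp add: alice_ip)
  have "(\<Sum>k<dA. eta (mu k)) \<le> (\<Sum>k<dA. eta (lam k))"
    using lower_bound[OF dv, of u] du al[OF du] by (simp add: dec_def)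
  moreover have "(\<Sum>k<dA. eta (lam k)) \<le> (\<Sum>k<dA. eta (mu k))"
    using lower_bound[OF du, of v] dv al[OF dv] by (simp add: dec_def)
  ultimately show "s = (\<Sum>k<dA. eta (mu k))" using s by simp
qed

lemma probAB_ip: "probAB dA dB psi a bs i j = (cmod (ip dB (bs i j) (phiA dA psi (a i))))\<^sup>2"
proof -
  have "(\<Sum>x<dA. \<Sum>y<dB. cnj (a i x) * cnj (bs i j y) * psi x y) = (\<Sum>y<dB. cnj (bs i j y) * (\<Sum>x<dA. cnj (a i x) * psi x y))"
    unfolding sum_distrib_left by (rule trans[OF sum.swap]) (simp add: mult_ac)
  thus ?thesis by (simp add: probAB_def ip_def phiA_def)
qed

lemma probBA_swap: "probBA dA dB psi b as i j = probAB dB dA (\<lambda>y x. psi x y) b as i j"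
proof -
  have "(\<Sum>x<dA. \<Sum>y<dB. cnj (as i j x) * cnj (b i y) * psi x y) = (\<Sum>y<dB. \<Sum>x<dA. cnj (b i y) * cnj (as i j x) * psi x y)"
    by (rule trans[OF sum.swap]) (simp add: mult_ac)
  thus ?thesis by (simp add: probAB_def probBA_def)
qed

lemma AB_bound:
  assumes bs: "\<forall>i<dA. onb dB (bs i)"
  shows "(\<Sum>i<dA. eta (alice_prob dA (rhoA dA dB psi) a i)) \<le> (\<Sum>i<dA. \<Sum>j<dB. eta (probAB dA dB psi a bs i j))"
proof (rule sum_mono)
  fix i assume i: "i \<in> {..<dA}"
  have "alice_prob dA (rhoA dA dB psi) a i = (\<Sum>j<dB. probAB dA dB psi a bs i j)"
    using parseval[of dB "bs i" "phiA dA psi (a i)"] bs i by (simp add: alice_nrm probAB_ip)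
  also have "eta \<dots> \<le> (\<Sum>j<dB. eta (probAB dA dB psi a bs i j))"
    by (rule subadd_eta) (auto simp: probAB_ip)
  finally show "eta (alice_prob dA (rhoA dA dB psi) a i) \<le> (\<Sum>j<dB. eta (probAB dA dB psi a bs i j))" .
qed

lemma BA_final:
  assumes du: "dec dA (rhoA dA dB psi) u lam" and b: "onb dB b"
  shows "(\<Sum>k<dA. eta (lam k)) \<le> (\<Sum>i<dB. eta (alice_prob dB (rhoA dB dA (\<lambda>y x. psi x y)) b i))"
proof -
  have u: "onb dA u" using du by (simp add: dec_def)
  define phi where "phi k = phiA dA psi (u k)" for k
  have lam0: "lam k \<ge> 0" if "k < dA" for k using dec_mu_nonneg(2)[OF du that] .
  have ipphi: "ip dB (phi k) (phi l) = (if k = l then complex_of_real (lam k) else 0)" if "k < dA" "l < dA" for k l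
  proof -
    have o: "ip dA (u j) (u k) = (if j = k then 1 else 0)" if "j < dA" "k < dA" for j k
      using u that by (simp add: onb_ip)
    have "ip dB (phi k) (phi l) = ip dA (u l) (app dA (rhoA dA dB psi) (u k))" by (simp add: Q1 phi_def)
    also have "\<dots> = (\<Sum>j<dA. if j = k \<and> j = l then complex_of_real (lam j) else 0)"
      unfolding Q3[OF du] by (rule sum.cong) (use that in \<open>auto simp: o\<close>)
    also have "\<dots> = (if k = l then complex_of_real (lam k) else 0)" using that by auto
    finally show ?thesis .
  qed
  have nphi: "nrm dB (phi k) = lam k" if "k < dA" for k
    using ipphi[OF that that] ip_self[of dB "phi k"] by simp
  have phi0: "ip dB f (phi k) = 0" if "k < dA" "lam k = 0" for k f
  proof -
    have "\<forall>y<dB. phi k y = 0" using nrm_zero[of dB "phi k"] nphi that by auto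
    thus ?thesis by (simp add: ip_def)
  qed
  have ipswap: "ip dA (u k) (phiA dB (\<lambda>y x. psi x y) (b i)) = ip dB (b i) (phi k)" for k i
  proof -
    have "(\<Sum>x<dA. cnj (u k x) * (\<Sum>y<dB. cnj (b i y) * psi x y)) = (\<Sum>y<dB. cnj (b i y) * (\<Sum>x<dA. cnj (u k x) * psi x y))"
      unfolding sum_distrib_left by (rule trans[OF sum.swap]) (simp add: mult_ac)
    thus ?thesis by (simp add: ip_def phiA_def phi_def)
  qed
  define B where "B i k = (if lam k > 0 then (cmod (ip dB (b i) (phi k)))\<^sup>2 / lam k else 0)" for i k
  show ?thesis
  proof (rule jensen_eta[where B = B])
    show "\<And>k. k \<in> {..<dA} \<Longrightarrow> 0 \<le> lam k" using lam0 by auto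
    show "\<And>i k. i \<in> {..<dB} \<Longrightarrow> k \<in> {..<dA} \<Longrightarrow> 0 \<le> B i k" by (simp add: B_def)
    show "alice_prob dB (rhoA dB dA (\<lambda>y x. psi x y)) b i = (\<Sum>k<dA. B i k * lam k)" if i: "i \<in> {..<dB}" for i
    proof -
      have "alice_prob dB (rhoA dB dA (\<lambda>y x. psi x y)) b i = nrm dA (phiA dB (\<lambda>y x. psi x y) (b i))"
        by (rule alice_nrm)
      also have "\<dots> = (\<Sum>k<dA. (cmod (ip dB (b i) (phi k)))\<^sup>2)"
        using parseval[OF u, of "phiA dB (\<lambda>y x. psi x y) (b i)"] by (simp add: ipswap)
      also have "\<dots> = (\<Sum>k<dA. B i k * lam k)"
      proof (rule sum.cong)
        fix k assume k: "k \<in> {..<dA}"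
        show "(cmod (ip dB (b i) (phi k)))\<^sup>2 = B i k * lam k"
        proof (cases "lam k > 0")
          case True thus ?thesis by (simp add: B_def)
        next
          case False
          hence "lam k = 0" using lam0 k by force
          thus ?thesis using phi0 k by (simp add: B_def)
        qed
      qed simp
      finally show ?thesis .
    qed
    show "(\<Sum>k<dA. B i k) \<le> 1" if i: "i \<in> {..<dB}" for i
    proof -
      define K where "K = {k \<in> {..<dA}. lam k > 0}"
      have "(\<Sum>k<dA. B i k) = (\<Sum>k\<in>K. (cmod (ip dB (phi k) (b i)))\<^sup>2 / lam k)"
        unfolding K_def by (subst sum.inter_filter) (auto simp: B_def ip_cnj[of dB "b i"] intro!: sum.cong)
      also have "\<dots> \<le> nrm dB (b i)"
        by (rule bessel) (auto simp: K_def ipphi)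
      also have "\<dots> = 1" using onb_nrm[OF b] i by simp
      finally show ?thesis .
    qed
    show "(\<Sum>i<dB. B i k) = 1" if k: "k \<in> {..<dA}" and lp: "lam k > 0" for k
    proof -
      have "(\<Sum>i<dB. B i k) = (\<Sum>i<dB. (cmod (ip dB (b i) (phi k)))\<^sup>2) / lam k"
        using lp by (simp add: B_def sum_divide_distrib)
      also have "\<dots> = 1" using parseval[OF b, of "phi k"] nphi k lp by simp
      finally show ?thesis .
    qed
  qed auto
qed

lemma construct:
  assumes du: "dec dA (rhoA dA dB psi) u lam" and dB: "dB > 0"
  shows "\<exists>bs. (\<forall>i<dA. onb dB (bs i)) \<and>
    (\<Sum>i<dA. \<Sum>j<dB. eta (probAB dA dB psi u bs i j)) = (\<Sum>i<dA. eta (lam i))"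
proof -
  define phi where "phi i = phiA dA psi (u i)" for i
  have nphi: "nrm dB (phi i) = lam i" if "i < dA" for i
    using dec_mu_nonneg(1)[OF du that] by (simp add: phi_def)
  have lam0: "lam k \<ge> 0" if "k < dA" for k using dec_mu_nonneg(2)[OF du that] .
  define w where "w i = (\<lambda>y. complex_of_real (1 / sqrt (lam i)) * phi i y)" for i
  have ex: "\<exists>b. onb dB b \<and> (i < dA \<and> 0 < lam i \<longrightarrow> b 0 = w i)" for i
  proof (cases "i < dA \<and> 0 < lam i")
    case True
    have "ip dB (w i) (w i) = cnj (complex_of_real (1 / sqrt (lam i))) * (complex_of_real (1 / sqrt (lam i)) * ip dB (phi i) (phi i))"
      by (simp only: w_def ip_scale_left ip_scale_right)
    also have "\<dots> = 1" using True nphi[of i]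
      by (simp add: ip_self real_sqrt_mult[symmetric] flip: of_real_mult)
    finally have w1: "ip dB (w i) (w i) = 1" .
    have "orthn dB 1 (\<lambda>_. w i)" by (simp add: orthn_def w1)
    then obtain b where "onb dB b" "\<forall>j<1. b j = w i" using ext_all[of 1 dB "\<lambda>_. w i"] dB by auto
    thus ?thesis by auto
  next
    case False
    obtain b where "onb dB b" using ext_all[of 0 dB u] by (auto simp: orthn_def)
    thus ?thesis using False by auto
  qed
  obtain bs where bs: "\<And>i. onb dB (bs i) \<and> (i < dA \<and> 0 < lam i \<longrightarrow> bs i 0 = w i)"
    using ex by metis
  have row: "(\<Sum>j<dB. eta (probAB dA dB psi u bs i j)) = eta (lam i)" if i: "i < dA" for i
  proof (cases "lam i > 0")
    case True
    have b0: "bs i 0 = w i" using bs[of i] i True by auto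
    have o: "ip dB (bs i j) (bs i l) = (if j = l then 1 else 0)" if "j < dB" "l < dB" for j l
      using bs[of i] that by (simp add: onb_ip)
    have phiw: "phi i y = complex_of_real (sqrt (lam i)) * bs i 0 y" for y
      using True by (simp add: b0 w_def real_sqrt_divide flip: of_real_mult)
    have p: "probAB dA dB psi u bs i j = (if j = 0 then lam i else 0)" if j: "j < dB" for j
    proof -
      have "ip dB (bs i j) (phi i) = ip dB (bs i j) (\<lambda>y. complex_of_real (sqrt (lam i)) * bs i 0 y)"
        by (rule ip_cong) (simp_all add: phiw)
      also have "\<dots> = complex_of_real (sqrt (lam i)) * ip dB (bs i j) (bs i 0)"
        by (rule ip_scale_right)
      also have "\<dots> = (if j = 0 then complex_of_real (sqrt (lam i)) else 0)" using j dB by (simp add: o)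
      finally show ?thesis using True by (simp add: probAB_ip phi_def)
    qed
    have "(\<Sum>j<dB. eta (probAB dA dB psi u bs i j)) = (\<Sum>j<dB. if j = 0 then eta (lam i) else 0)"
      by (rule sum.cong) (auto simp: p eta_def)
    also have "\<dots> = eta (lam i)" using dB by simp
    finally show ?thesis .
  next
    case False
    hence l0: "lam i = 0" using lam0 i by force
    have "\<forall>y<dB. phi i y = 0" using nrm_zero[of dB "phi i"] nphi i l0 by auto
    hence "probAB dA dB psi u bs i j = 0" for j by (simp add: probAB_ip phi_def[symmetric] ip_def)
    thus ?thesis using l0 by (simp add: eta_def)
  qed
  show ?thesis using bs row by (intro exI[of _ bs]) auto
qed

theorem mainTheorem1:
  fixes dA dB :: nat and psi :: "nat \<Rightarrow> nat \<Rightarrow> complex"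
  assumes "(\<Sum>x<dA. \<Sum>y<dB. (cmod (psi x y))\<^sup>2) = 1"
  shows "vn_entropy dA (rhoA dA dB psi) \<in> scheme_entropies dA dB psi
    \<and> E_MB dA dB psi = vn_entropy dA (rhoA dA dB psi)
    \<and> (\<forall>c. onb dA c \<longrightarrow>
          (\<Sum>k<dA. eta (alice_prob dA (rhoA dA dB psi) c k)) \<ge> vn_entropy dA (rhoA dA dB psi))
    \<and> (\<forall>c. eigenbasis dA (rhoA dA dB psi) c \<longrightarrow>
          (\<Sum>k<dA. eta (alice_prob dA (rhoA dA dB psi) c k)) = vn_entropy dA (rhoA dA dB psi))"
proof -
  let ?r = "rhoA dA dB psi"
  have dB: "dB > 0"
  proof (rule ccontr)
    assume "\<not> dB > 0"
    hence "dB = 0" by simp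
    thus False using assms by simp
  qed
  obtain c0 where c0: "onb dA c0" and ev0: "\<forall>k<dA. \<exists>\<mu>. \<forall>x<dA. app dA ?r (c0 k) x = \<mu> * c0 k x"
    using spectral[OF herm_rho[of dA dB psi]] by blast
  define lam where "lam k = alice_prob dA ?r c0 k" for k
  have du: "dec dA ?r c0 lam" unfolding lam_def by (rule eig_dec[OF c0 ev0])
  have vn: "vn_entropy dA ?r = (\<Sum>k<dA. eta (lam k))" by (rule vn_eq[OF du])
  have c3: "\<forall>c. onb dA c \<longrightarrow> (\<Sum>k<dA. eta (alice_prob dA ?r c k)) \<ge> vn_entropy dA ?r"
    using lower_bound[OF du] vn by simp
  have c4: "\<forall>c. eigenbasis dA ?r c \<longrightarrow> (\<Sum>k<dA. eta (alice_prob dA ?r c k)) = vn_entropy dA ?r"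
  proof (intro allI impI)
    fix c assume "eigenbasis dA ?r c"
    hence c: "onb dA c" and ev: "\<forall>k<dA. \<exists>\<mu>. \<forall>x<dA. app dA ?r (c k) x = \<mu> * c k x"
      by (auto simp: eigenbasis_def app_def)
    show "(\<Sum>k<dA. eta (alice_prob dA ?r c k)) = vn_entropy dA ?r"
      using vn_eq[OF eig_dec[OF c ev]] by simp
  qed
  have lb: "vn_entropy dA ?r \<le> h" if h: "h \<in> scheme_entropies dA dB psi" for h
  proof -
    from h consider
      (AB) a bs where "onb dA a" "\<forall>i<dA. onb dB (bs i)" "h = (\<Sum>i<dA. \<Sum>j<dB. eta (probAB dA dB psi a bs i j))"
    | (BA) b as where "onb dB b" "\<forall>i<dB. onb dA (as i)" "h = (\<Sum>i<dB. \<Sum>j<dA. eta (probBA dA dB psi b as i j))"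
      unfolding scheme_entropies_def by blast
    thus ?thesis
    proof cases
      case AB
      thus ?thesis using c3 AB_bound[of dA dB bs psi a] by force
    next
      case BA
      have "vn_entropy dA ?r \<le> (\<Sum>i<dB. eta (alice_prob dB (rhoA dB dA (\<lambda>y x. psi x y)) b i))"
        using BA_final[OF du BA(1)] vn by simp
      also have "\<dots> \<le> (\<Sum>i<dB. \<Sum>j<dA. eta (probAB dB dA (\<lambda>y x. psi x y) b as i j))"
        by (rule AB_bound) (use BA in auto)
      also have "\<dots> = h" using BA(3) by (simp add: probBA_swap)
      finally show ?thesis .
    qed
  qed
  have mem: "vn_entropy dA ?r \<in> scheme_entropies dA dB psi"
  proof -
    obtain bs where "\<forall>i<dA. onb dB (bs i)" "(\<Sum>i<dA. \<Sum>j<dB. eta (probAB dA dB psi c0 bs i j)) = (\<Sum>i<dA. eta (lam i))"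
      using construct[OF du dB] by blast
    thus ?thesis unfolding scheme_entropies_def using c0 vn
      by (intro UnI1 CollectI exI[of _ c0] exI[of _ bs]) auto
  qed
  have "E_MB dA dB psi = vn_entropy dA ?r"
    unfolding E_MB_def by (rule cInf_eq_minimum[OF mem lb])
  with mem c3 c4 show ?thesis by blast
qed

end
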